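(* Let $X,Y\in\Sigma^*$ and positions $i\le j$ and $i'\le j'$ in $[0,|Y|]$. Let $\mathcal{A}$ be an alignment of $X$ onto $Y[i\,.\,.\,j)$ and $\mathcal{A}'$ an alignment of $X$ onto $Y[i'\,.\,.\,j')$. If $\mathcal{A}$ and $\mathcal{A}'$, viewed as paths in the alignment graph of $X$ and $Y$, do not contain any common diagonal edge, then $\mathrm{selfed}(X)\le|i-i'|+\mathrm{ed}_{\mathcal{A}}(X,Y[i\,.\,.\,j))+\mathrm{ed}_{\mathcal{A}'}(X,Y[i'\,.\,.\,j'))+|j-j'|$.
   Context: $Y[i\,.\,.\,j)$ is the fragment $Y[i]\cdots Y[j-1]$. An alignment of $X$ onto $Y[i\,.\,.\,j)$ is a path in the grid graph on $[0,|X|]\times[0,|Y|]$ from $(0,i)$ to $(|X|,j)$ using steps $(1,0)$, $(0,1)$, $(1,1)$; the steps $(x,y)\to(x+1,y+1)$ are diagonal edges. Its unweighted cost counts steps $(1,0)$, $(0,1)$, and diagonal steps $(x,y)\to(x+1,y+1)$ with $X[x]\ne Y[y]$. A self-alignment of $X$ is an alignment of $X$ onto $X$ with no edge $(x,x)\to(x+1,x+1)$; $\mathrm{selfed}(X)$ is the minimum unweighted cost of a self-alignment. *)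

theory Defs
  imports Main
begin

text \<open>Strings are lists. A path in the grid graph is the list of its vertices (x, y);
  its edges are the consecutive pairs.\<close>

definition edges :: "(nat \<times> nat) list \<Rightarrow> ((nat \<times> nat) \<times> (nat \<times> nat)) list" where
  "edges P = zip P (tl P)"

definition grid_step :: "nat \<times> nat \<Rightarrow> nat \<times> nat \<Rightarrow> bool" where
  "grid_step p q \<longleftrightarrow> q = (fst p + 1, snd p) \<or> q = (fst p, snd p + 1) \<or> q = (fst p + 1, snd p + 1)"

definition is_alignment :: "'a list \<Rightarrow> 'a list \<Rightarrow> nat \<Rightarrow> nat \<Rightarrow> (nat \<times> nat) list \<Rightarrow> bool" where
  "is_alignment X Y i j A \<longleftrightarrow>
     A \<noteq> [] \<and> hd A = (0, i) \<and> last A = (length X, j) \<and>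
     (\<forall>p \<in> set A. fst p \<le> length X \<and> snd p \<le> length Y) \<and>
     (\<forall>e \<in> set (edges A). grid_step (fst e) (snd e))"

definition is_diag :: "(nat \<times> nat) \<times> (nat \<times> nat) \<Rightarrow> bool" where
  "is_diag e \<longleftrightarrow> snd e = (fst (fst e) + 1, snd (fst e) + 1)"

definition diag_edges :: "(nat \<times> nat) list \<Rightarrow> ((nat \<times> nat) \<times> (nat \<times> nat)) set" where
  "diag_edges A = {e \<in> set (edges A). is_diag e}"

definition align_cost :: "'a list \<Rightarrow> 'a list \<Rightarrow> (nat \<times> nat) list \<Rightarrow> nat" where
  "align_cost X Y A =
     sum_list (map (\<lambda>e. if is_diag e \<and> X ! fst (fst e) = Y ! snd (fst e) then 0 else 1) (edges A))"

definition is_self_alignment :: "'a list \<Rightarrow> (nat \<times> nat) list \<Rightarrow> bool" where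
  "is_self_alignment X A \<longleftrightarrow> is_alignment X X 0 (length X) A \<and>
     (\<forall>x. ((x, x), (x + 1, x + 1)) \<notin> set (edges A))"

definition selfed :: "'a list \<Rightarrow> nat" where
  "selfed X = Min {align_cost X X A | A. is_self_alignment X A}"

end

theory Submission
  imports Defs
begin

definition ec :: "'a list \<Rightarrow> 'a list \<Rightarrow> (nat \<times> nat) \<times> (nat \<times> nat) \<Rightarrow> nat" where
  "ec X Y e = (if is_diag e \<and> X ! fst (fst e) = Y ! snd (fst e) then 0 else 1)"

definition gpath :: "nat \<Rightarrow> (nat \<times> nat) list \<Rightarrow> bool" where
  "gpath n A \<longleftrightarrow> (\<forall>p\<in>set A. fst p \<le> n) \<and> (\<forall>e\<in>set (edges A). grid_step (fst e) (snd e))"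

definition good :: "nat \<Rightarrow> (nat \<times> nat) list \<Rightarrow> nat \<Rightarrow> nat \<Rightarrow> bool" where
  "good n B a a' \<longleftrightarrow> B \<noteq> [] \<and> hd B = (a,a') \<and> last B = (n,n) \<and> gpath n B \<and>
     (\<forall>p\<in>set B. snd p \<le> n) \<and> (\<forall>x. ((x,x),(x+1,x+1)) \<notin> set (edges B))"

lemma edges_single[simp]: "edges [p] = []"
  by (simp add: edges_def)

lemma edges_Cons: "B \<noteq> [] \<Longrightarrow> edges (p#B) = (p, hd B) # edges B"
  by (cases B) (auto simp: edges_def)

lemma cost_single[simp]: "align_cost X Y [p] = 0"
  by (simp add: align_cost_def)

lemma cost_Cons: "B \<noteq> [] \<Longrightarrow> align_cost X Y (p#B) = ec X Y (p, hd B) + align_cost X Y B"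
  by (simp add: align_cost_def edges_Cons ec_def)

lemma gpath_Cons: "B \<noteq> [] \<Longrightarrow> gpath n (p#B) \<longleftrightarrow> fst p \<le> n \<and> grid_step p (hd B) \<and> gpath n B"
  by (auto simp: gpath_def edges_Cons)

lemma diag_Cons: "B \<noteq> [] \<Longrightarrow> diag_edges B \<subseteq> diag_edges (p#B)"
  by (auto simp: diag_edges_def edges_Cons)

lemma diag_Cons_mem: "B \<noteq> [] \<Longrightarrow> is_diag (p, hd B) \<Longrightarrow> (p, hd B) \<in> diag_edges (p#B)"
  by (auto simp: diag_edges_def edges_Cons)

lemma fin_cost:
  "gpath n A \<Longrightarrow> A \<noteq> [] \<Longrightarrow> hd A = (a,y) \<Longrightarrow> last A = (m,j) \<Longrightarrow>
   int m - int a \<le> int (align_cost X Y A) + int j - int y"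
proof (induction A arbitrary: a y)
  case Nil then show ?case by simp
next
  case (Cons p B)
  show ?case
  proof (cases "B = []")
    case True then show ?thesis using Cons by simp
  next
    case False
    obtain c z where q: "hd B = (c,z)" by (cases "hd B")
    have gs: "grid_step (a,y) (c,z)" and gB: "gpath n B" using Cons False q by (auto simp: gpath_Cons)
    have IH: "int m - int c \<le> int (align_cost X Y B) + int j - int z"
      using Cons.IH[OF gB False q] Cons.prems False by simp
    have "int c - int a \<le> int (ec X Y ((a,y),(c,z))) + int z - int y"
      using gs by (auto simp: grid_step_def ec_def is_diag_def)
    then show ?thesis using IH Cons.prems False q by (simp add: cost_Cons)
  qed
qed

lemma len_cost:
  "gpath n A \<Longrightarrow> A \<noteq> [] \<Longrightarrow> hd A = (a,y) \<Longrightarrow> last A = (m,j) \<Longrightarrow>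
   align_cost X Y A + a + y \<le> m + j"
proof (induction A arbitrary: a y)
  case Nil then show ?case by simp
next
  case (Cons p B)
  show ?case
  proof (cases "B = []")
    case True then show ?thesis using Cons by simp
  next
    case False
    obtain c z where q: "hd B = (c,z)" by (cases "hd B")
    have gs: "grid_step (a,y) (c,z)" and gB: "gpath n B" using Cons False q by (auto simp: gpath_Cons)
    have IH: "align_cost X Y B + c + z \<le> m + j"
      using Cons.IH[OF gB False q] Cons.prems False by simp
    have "ec X Y ((a,y),(c,z)) + a + y \<le> c + z"
      using gs by (auto simp: grid_step_def ec_def is_diag_def)
    then show ?thesis using IH Cons.prems False q by (simp add: cost_Cons)
  qed
qed

lemma good_Cons:
  assumes "good n B a2 a2'" "a \<le> n" "a' \<le> n" "grid_step (a,a') (a2,a2')"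
    "\<not> (a = a' \<and> (a2,a2') = (a+1,a'+1))"
  shows "good n ((a,a')#B) a a'"
    "align_cost X X ((a,a')#B) = ec X X ((a,a'),(a2,a2')) + align_cost X X B"
  using assms by (auto simp: good_def gpath_Cons edges_Cons cost_Cons)

lemma vline: "a' \<le> n \<Longrightarrow> \<exists>B. good n B n a' \<and> align_cost X X B = n - a'"
proof (induction a' rule: inc_induct)
  case base
  then show ?case by (intro exI[of _ "[(n,n)]"]) (simp add: good_def gpath_def)
next
  case (step k)
  then obtain B where B: "good n B n (Suc k)" "align_cost X X B = n - Suc k" by blast
  have "good n ((n,k)#B) n k" "align_cost X X ((n,k)#B) = ec X X ((n,k),(n,Suc k)) + align_cost X X B"
    using good_Cons[OF B(1), of n k] step by (auto simp: grid_step_def)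
  moreover have "ec X X ((n,k),(n,Suc k)) = 1" by (simp add: ec_def is_diag_def)
  ultimately show ?case using B step by (intro exI[of _ "(n,k)#B"]) simp
qed

lemma hline: "a \<le> n \<Longrightarrow> \<exists>B. good n B a n \<and> align_cost X X B = n - a"
proof (induction a rule: inc_induct)
  case base
  then show ?case by (intro exI[of _ "[(n,n)]"]) (simp add: good_def gpath_def)
next
  case (step k)
  then obtain B where B: "good n B (Suc k) n" "align_cost X X B = n - Suc k" by blast
  have "good n ((k,n)#B) k n" "align_cost X X ((k,n)#B) = ec X X ((k,n),(Suc k,n)) + align_cost X X B"
    using good_Cons[OF B(1), of k n] step by (auto simp: grid_step_def)
  moreover have "ec X X ((k,n),(Suc k,n)) = 1" by (simp add: ec_def is_diag_def)
  ultimately show ?case using B step by (intro exI[of _ "(k,n)#B"]) simp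
qed


lemma core:
  fixes X Y :: "'a list"
  shows "gpath n A \<Longrightarrow> gpath n A' \<Longrightarrow> A \<noteq> [] \<Longrightarrow> A' \<noteq> [] \<Longrightarrow> hd A = (a,y) \<Longrightarrow> hd A' = (a',y')
   \<Longrightarrow> last A = (n,j) \<Longrightarrow> last A' = (n,j') \<Longrightarrow> diag_edges A \<inter> diag_edges A' = {} \<Longrightarrow>
   \<exists>B. good n B a a' \<and> int (align_cost X X B) \<le> \<bar>int y - int y'\<bar> + int (align_cost X Y A)
       + int (align_cost X Y A') + \<bar>int j - int j'\<bar>"
proof (induction "length A + length A'" arbitrary: A A' a y a' y' rule: less_induct)
  case less
  obtain As where A: "A = (a,y)#As" using less.prems by (cases A) auto
  obtain As' where A': "A' = (a',y')#As'" using less.prems by (cases A') auto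
  have an: "a \<le> n" "a' \<le> n" using less.prems A A' by (auto simp: gpath_def)
  show ?case
  proof (cases "As = []")
    case True
    then have "a = n" "y = j" using less.prems A by auto
    obtain B where B: "good n B n a'" "align_cost X X B = n - a'" using vline an by blast
    have "int n - int a' \<le> int (align_cost X Y A') + int j' - int y'"
      using fin_cost[OF less.prems(2,4,6,8)] .
    then show ?thesis using B \<open>a = n\<close> \<open>y = j\<close> an by (intro exI[of _ B]) auto
  next
    case AsN: False
    show ?thesis
    proof (cases "As' = []")
      case True
      then have "a' = n" "y' = j'" using less.prems A' by auto
      obtain B where B: "good n B a n" "align_cost X X B = n - a" using hline an by blast
      have "int n - int a \<le> int (align_cost X Y A) + int j - int y"
        using fin_cost[OF less.prems(1,3,5,7)] .
      then show ?thesis using B \<open>a' = n\<close> \<open>y' = j'\<close> an by (intro exI[of _ B]) auto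
    next
      case AsN': False
      obtain c z where q: "hd As = (c,z)" by (cases "hd As")
      obtain c' z' where q': "hd As' = (c',z')" by (cases "hd As'")
      have gs: "grid_step (a,y) (c,z)" and gA: "gpath n As"
        using less.prems(1) A AsN q by (auto simp: gpath_Cons)
      have gs': "grid_step (a',y') (c',z')" and gA': "gpath n As'"
        using less.prems(2) A' AsN' q' by (auto simp: gpath_Cons)
      have lA: "last As = (n,j)" using less.prems A AsN by auto
      have lA': "last As' = (n,j')" using less.prems A' AsN' by auto
      have dA: "diag_edges As \<subseteq> diag_edges A" using A AsN diag_Cons by blast
      have dA': "diag_edges As' \<subseteq> diag_edges A'" using A' AsN' diag_Cons by blast
      have cA: "align_cost X Y A = ec X Y ((a,y),(c,z)) + align_cost X Y As"
        using A AsN q cost_Cons by metis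
      have cA': "align_cost X Y A' = ec X Y ((a',y'),(c',z')) + align_cost X Y As'"
        using A' AsN' q' cost_Cons by metis
      have IH1: "\<exists>B. good n B c a' \<and> int (align_cost X X B) \<le> \<bar>int z - int y'\<bar> + int (align_cost X Y As)
       + int (align_cost X Y A') + \<bar>int j - int j'\<bar>"
        using less.hyps[of As A' c z a' y'] gA less.prems(2,4,6,8,9) AsN q lA dA A by auto
      have IH2: "\<exists>B. good n B a c' \<and> int (align_cost X X B) \<le> \<bar>int y - int z'\<bar> + int (align_cost X Y A)
       + int (align_cost X Y As') + \<bar>int j - int j'\<bar>"
        using less.hyps[of A As' a y c' z'] gA' less.prems(1,3,5,7,9) AsN' q' lA' dA' A' by auto
      have IH3: "\<exists>B. good n B c c' \<and> int (align_cost X X B) \<le> \<bar>int z - int z'\<bar> + int (align_cost X Y As)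
       + int (align_cost X Y As') + \<bar>int j - int j'\<bar>"
        using less.hyps[of As As' c z c' z'] gA gA' less.prems(9) AsN AsN' q q' lA lA' dA dA' A A' by auto
      have step1: "\<exists>B. good n B a a' \<and> int (align_cost X X B) \<le> \<bar>int y - int y'\<bar> + int (align_cost X Y A)
       + int (align_cost X Y A') + \<bar>int j - int j'\<bar>"
        if "c = Suc a" "z = y \<or> y < y'"
      proof -
        obtain B where B: "good n B c a'" "int (align_cost X X B) \<le> \<bar>int z - int y'\<bar> + int (align_cost X Y As)
          + int (align_cost X Y A') + \<bar>int j - int j'\<bar>" using IH1 by blast
        have g: "good n ((a,a')#B) a a'" "align_cost X X ((a,a')#B) = ec X X ((a,a'),(c,a')) + align_cost X X B"
          using good_Cons[OF B(1), of a a'] an that by (auto simp: grid_step_def)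
        have "ec X X ((a,a'),(c,a')) = 1" by (simp add: ec_def is_diag_def)
        moreover have "\<bar>int z - int y'\<bar> + 1 \<le> \<bar>int y - int y'\<bar> + int (ec X Y ((a,y),(c,z)))"
          using gs that by (auto simp: grid_step_def ec_def is_diag_def)
        ultimately show ?thesis using g B cA by (intro exI[of _ "(a,a')#B"]) auto
      qed
      have step2: "\<exists>B. good n B a a' \<and> int (align_cost X X B) \<le> \<bar>int y - int y'\<bar> + int (align_cost X Y A)
       + int (align_cost X Y A') + \<bar>int j - int j'\<bar>"
        if "c' = Suc a'" "z' = y' \<or> y' < y"
      proof -
        obtain B where B: "good n B a c'" "int (align_cost X X B) \<le> \<bar>int y - int z'\<bar> + int (align_cost X Y A)
          + int (align_cost X Y As') + \<bar>int j - int j'\<bar>" using IH2 by blast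
        have g: "good n ((a,a')#B) a a'" "align_cost X X ((a,a')#B) = ec X X ((a,a'),(a,c')) + align_cost X X B"
          using good_Cons[OF B(1), of a a'] an that by (auto simp: grid_step_def)
        have "ec X X ((a,a'),(a,c')) = 1" by (simp add: ec_def is_diag_def)
        moreover have "\<bar>int y - int z'\<bar> + 1 \<le> \<bar>int y - int y'\<bar> + int (ec X Y ((a',y'),(c',z')))"
          using gs' that by (auto simp: grid_step_def ec_def is_diag_def)
        ultimately show ?thesis using g B cA' by (intro exI[of _ "(a,a')#B"]) auto
      qed
      show ?thesis
      proof (cases "c = a")
        case True
        then have z: "z = Suc y" using gs by (auto simp: grid_step_def)
        obtain B where B: "good n B c a'" "int (align_cost X X B) \<le> \<bar>int z - int y'\<bar> + int (align_cost X Y As)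
          + int (align_cost X Y A') + \<bar>int j - int j'\<bar>" using IH1 by blast
        have "ec X Y ((a,y),(c,z)) = 1" using True by (simp add: ec_def is_diag_def)
        then show ?thesis using B True z cA by (intro exI[of _ B]) auto
      next
        case cna: False
        then have c: "c = Suc a" using gs by (auto simp: grid_step_def)
        show ?thesis
        proof (cases "c' = a'")
          case True
          then have z: "z' = Suc y'" using gs' by (auto simp: grid_step_def)
          obtain B where B: "good n B a c'" "int (align_cost X X B) \<le> \<bar>int y - int z'\<bar> + int (align_cost X Y A)
            + int (align_cost X Y As') + \<bar>int j - int j'\<bar>" using IH2 by blast
          have "ec X Y ((a',y'),(c',z')) = 1" using True by (simp add: ec_def is_diag_def)
          then show ?thesis using B True z cA' by (intro exI[of _ B]) auto
        next
          case cna': False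
          then have c': "c' = Suc a'" using gs' by (auto simp: grid_step_def)
          show ?thesis
          proof (cases "z = y \<or> y < y'")
            case True then show ?thesis using step1 c by blast
          next
            case F1: False
            show ?thesis
            proof (cases "z' = y' \<or> y' < y")
              case True then show ?thesis using step2 c' by blast
            next
              case F2: False
              have yy: "y = y'" using F1 F2 by auto
              have z: "z = Suc y" "z' = Suc y'" using F1 F2 gs gs' c c' by (auto simp: grid_step_def)
              have "((a,y),(c,z)) \<in> diag_edges A" using diag_Cons_mem[OF AsN, of "(a,y)"] A q c z
                by (simp add: is_diag_def)
              moreover have "((a',y'),(c',z')) \<in> diag_edges A'" using diag_Cons_mem[OF AsN', of "(a',y')"] A' q' c' z
                by (simp add: is_diag_def)
              ultimately have ana: "a \<noteq> a'" using less.prems(9) yy c c' z by auto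
              obtain B where B: "good n B c c'" "int (align_cost X X B) \<le> \<bar>int z - int z'\<bar> + int (align_cost X Y As)
                + int (align_cost X Y As') + \<bar>int j - int j'\<bar>" using IH3 by blast
              have g: "good n ((a,a')#B) a a'" "align_cost X X ((a,a')#B) = ec X X ((a,a'),(c,c')) + align_cost X X B"
                using good_Cons[OF B(1), of a a'] an c c' ana by (auto simp: grid_step_def)
              have "ec X X ((a,a'),(c,c')) \<le> ec X Y ((a,y),(c,z)) + ec X Y ((a',y'),(c',z'))"
                using c c' z yy by (auto simp: ec_def is_diag_def)
              then show ?thesis using g B cA cA' yy z by (intro exI[of _ "(a,a')#B"]) auto
            qed
          qed
        qed
      qed
    qed
  qed
qed


lemma selfed_le:
  assumes "good (length X) B 0 0"
  shows "selfed X \<le> align_cost X X B"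
proof -
  have sa: "is_self_alignment X B"
    using assms by (auto simp: good_def gpath_def is_self_alignment_def is_alignment_def)
  have "{align_cost X X A | A. is_self_alignment X A} \<subseteq> {..2 * length X}"
  proof
    fix c assume "c \<in> {align_cost X X A | A. is_self_alignment X A}"
    then obtain A where A: "is_self_alignment X A" "c = align_cost X X A" by blast
    have "gpath (length X) A" using A by (auto simp: is_self_alignment_def is_alignment_def gpath_def)
    then have "align_cost X X A + 0 + 0 \<le> length X + length X"
      using len_cost[of "length X" A 0 0 "length X" "length X" X X] A
      by (auto simp: is_self_alignment_def is_alignment_def)
    then show "c \<in> {..2 * length X}" using A by simp
  qed
  then have "finite {align_cost X X A | A. is_self_alignment X A}" using finite_subset by blast
  then show ?thesis unfolding selfed_def using sa by (intro Min_le) auto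
qed

theorem lemma4p4:
  fixes X Y :: "'a list" and i j i' j' :: nat and A A' :: "(nat \<times> nat) list"
  assumes "i \<le> j" "j \<le> length Y" "i' \<le> j'" "j' \<le> length Y"
    and "is_alignment X Y i j A" and "is_alignment X Y i' j' A'"
    and "diag_edges A \<inter> diag_edges A' = {}"
  shows "int (selfed X) \<le> \<bar>int i - int i'\<bar> + int (align_cost X Y A) + int (align_cost X Y A')
           + \<bar>int j - int j'\<bar>"
proof -
  have g: "gpath (length X) A" "gpath (length X) A'" using assms(5,6)
    by (auto simp: is_alignment_def gpath_def)
  obtain B where B: "good (length X) B 0 0" "int (align_cost X X B) \<le> \<bar>int i - int i'\<bar> + int (align_cost X Y A)
       + int (align_cost X Y A') + \<bar>int j - int j'\<bar>"
    using core[OF g, of 0 i 0 i' j j' X Y] assms(5,6,7) by (auto simp: is_alignment_def)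
  show ?thesis using selfed_le[OF B(1)] B(2) by linarith
qed

end
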